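(* Let $X$ be a countably infinite set. The lattice $\mathrm{Cl}_{loc}(X)$ of local clones on $X$ does not embed (as a lattice) into the clone lattice $\mathrm{Cl}(A)$ over any finite set $A$.
   Context: For a set $Y$, a clone on $Y$ is a set of finitary operations on $Y$ containing all projections and closed under composition; $\mathrm{Cl}(Y)$ is the lattice of all clones on $Y$ ordered by inclusion. Giving $X$ the discrete topology and $X^{X^n}$ the product topology, a clone on $X$ is local if for each $n\ge1$ its set of $n$-ary operations is closed in $X^{X^n}$; equivalently, an $n$-ary operation $g$ belongs to the clone whenever for every finite $B\subseteq X^n$ some $n$-ary operation of the clone agrees with $g$ on $B$. $\mathrm{Cl}_{loc}(X)$ is the complete lattice of local clones on $X$ ordered by inclusion. A lattice embedding is an injective map preserving binary meets and joins. *)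

theory Defs
  imports "HOL-Library.Countable_Set"
begin

text \<open>A finitary operation on a set Y is represented as a pair (n, f) where n \<ge> 1 is
the arity and f acts on argument lists of length n with entries in Y; outside of
that domain f is fixed to undefined (so operations are extensional).\<close>

type_synonym 'a operation = "nat \<times> ('a list \<Rightarrow> 'a)"

definition args :: "'a set \<Rightarrow> nat \<Rightarrow> 'a list set" where
  "args Y n = {xs. length xs = n \<and> set xs \<subseteq> Y}"

definition is_op :: "'a set \<Rightarrow> 'a operation \<Rightarrow> bool" where
  "is_op Y p \<longleftrightarrow> fst p \<ge> 1 \<and> (\<forall>xs\<in>args Y (fst p). snd p xs \<in> Y)
      \<and> (\<forall>xs. xs \<notin> args Y (fst p) \<longrightarrow> snd p xs = undefined)"

definition proj :: "'a set \<Rightarrow> nat \<Rightarrow> nat \<Rightarrow> 'a operation" where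
  "proj Y n i = (n, \<lambda>xs. if xs \<in> args Y n then xs ! i else undefined)"

definition compose :: "'a set \<Rightarrow> 'a operation \<Rightarrow> 'a operation list \<Rightarrow> 'a operation" where
  "compose Y f gs = (fst (hd gs),
     \<lambda>xs. if xs \<in> args Y (fst (hd gs)) then snd f (map (\<lambda>g. snd g xs) gs) else undefined)"

definition clone :: "'a set \<Rightarrow> 'a operation set \<Rightarrow> bool" where
  "clone Y C \<longleftrightarrow> (\<forall>p\<in>C. is_op Y p)
     \<and> (\<forall>n i. 1 \<le> n \<and> i < n \<longrightarrow> proj Y n i \<in> C)
     \<and> (\<forall>f gs m. f \<in> C \<and> length gs = fst f \<and> set gs \<subseteq> C \<and> (\<forall>g\<in>set gs. fst g = m)
           \<longrightarrow> compose Y f gs \<in> C)"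

definition Cl :: "'a set \<Rightarrow> 'a operation set set" where
  "Cl Y = {C. clone Y C}"

text \<open>Local clones: closed in the topology of pointwise convergence, stated via
the finite-interpolation characterisation.\<close>
definition local_clone :: "'a set \<Rightarrow> 'a operation set \<Rightarrow> bool" where
  "local_clone X C \<longleftrightarrow> clone X C \<and>
     (\<forall>g. is_op X g \<and>
          (\<forall>B. finite B \<and> B \<subseteq> args X (fst g) \<longrightarrow>
               (\<exists>f\<in>C. fst f = fst g \<and> (\<forall>xs\<in>B. snd f xs = snd g xs)))
        \<longrightarrow> g \<in> C)"

definition Cl_loc :: "'a set \<Rightarrow> 'a operation set set" where
  "Cl_loc X = {C. local_clone X C}"

definition is_glb :: "'b set set \<Rightarrow> 'b set \<Rightarrow> 'b set \<Rightarrow> 'b set \<Rightarrow> bool" where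
  "is_glb L a b c \<longleftrightarrow> c \<in> L \<and> c \<subseteq> a \<and> c \<subseteq> b \<and> (\<forall>d\<in>L. d \<subseteq> a \<and> d \<subseteq> b \<longrightarrow> d \<subseteq> c)"

definition is_lub :: "'b set set \<Rightarrow> 'b set \<Rightarrow> 'b set \<Rightarrow> 'b set \<Rightarrow> bool" where
  "is_lub L a b c \<longleftrightarrow> c \<in> L \<and> a \<subseteq> c \<and> b \<subseteq> c \<and> (\<forall>d\<in>L. a \<subseteq> d \<and> b \<subseteq> d \<longrightarrow> c \<subseteq> d)"

definition lattice_embedding :: "'b set set \<Rightarrow> 'c set set \<Rightarrow> ('b set \<Rightarrow> 'c set) \<Rightarrow> bool" where
  "lattice_embedding L1 L2 h \<longleftrightarrow> h ` L1 \<subseteq> L2 \<and> inj_on h L1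
     \<and> (\<forall>a\<in>L1. \<forall>b\<in>L1. \<forall>c. is_glb L1 a b c \<longrightarrow> is_glb L2 (h a) (h b) (h c))
     \<and> (\<forall>a\<in>L1. \<forall>b\<in>L1. \<forall>c. is_lub L1 a b c \<longrightarrow> is_lub L2 (h a) (h b) (h c))"

end

theory Submission
  imports Defs
begin

definition U :: "'x set \<Rightarrow> ('x\<Rightarrow>'x) \<Rightarrow> nat \<Rightarrow> nat \<Rightarrow> 'x operation" where
  "U X v n j = (n, \<lambda>xs. if xs \<in> args X n then v (xs ! j) else undefined)"

definition CU :: "'x set \<Rightarrow> ('x\<Rightarrow>'x) \<Rightarrow> 'x operation set" where
  "CU X v = {U X w n j | w n j. (w = (\<lambda>x. x) \<or> w = v) \<and> 1 \<le> n \<and> j < n}"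

lemma U_is_op: "v ` X \<subseteq> X \<Longrightarrow> 1 \<le> n \<Longrightarrow> j < n \<Longrightarrow> is_op X (U X v n j)"
  unfolding is_op_def U_def args_def by (auto, meson image_subset_iff nth_mem subsetD)

lemma CU_is_op: "v ` X \<subseteq> X \<Longrightarrow> p \<in> CU X v \<Longrightarrow> is_op X p"
  unfolding CU_def using U_is_op[of _ X] by auto

lemma U_eq: assumes "U X v n j = U X w n k" "j < n" "k < n" "x \<in> X"
  shows "v x = w x"
proof -
  have "replicate n x \<in> args X n" unfolding args_def using assms by auto
  then have "snd (U X v n j) (replicate n x) = v x" "snd (U X w n k) (replicate n x) = w x"
    using \<open>replicate n x \<in> args X n\<close> assms(2,3) unfolding U_def by auto
  moreover have "snd (U X v n j) (replicate n x) = snd (U X w n k) (replicate n x)"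
    using assms(1) by simp
  ultimately show ?thesis by simp
qed

lemma CU_clone:
  assumes vX: "v ` X \<subseteq> X" and idem: "\<forall>x\<in>X. v (v x) = v x"
  shows "clone X (CU X v)"
  unfolding clone_def
proof (intro conjI allI impI ballI)
  show "\<And>p. p \<in> CU X v \<Longrightarrow> is_op X p" using CU_is_op vX by blast
next
  fix n i :: nat assume "1 \<le> n \<and> i < n"
  then show "proj X n i \<in> CU X v" unfolding CU_def proj_def U_def by fastforce
next
  fix f gs m
  assume a: "f \<in> CU X v \<and> length gs = fst f \<and> set gs \<subseteq> CU X v \<and> (\<forall>g\<in>set gs. fst g = m)"
  then obtain v1 n j where f: "f = U X v1 n j" "v1 = (\<lambda>x. x) \<or> v1 = v" "1 \<le> n" "j < n"
    unfolding CU_def by auto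
  have len: "length gs = n" using a f by (simp add: U_def)
  have gj: "gs ! j \<in> CU X v" using a len f by auto
  then obtain w m' k where g: "gs ! j = U X w m' k" "w = (\<lambda>x. x) \<or> w = v" "1 \<le> m'" "k < m'"
    unfolding CU_def by auto
  have "fst (gs ! j) = m" using a len f by auto
  then have mm: "m' = m" using g by (simp add: U_def)
  have hd: "fst (hd gs) = m" using a len f by (cases gs) auto
  define w' where "w' = (if v1 = (\<lambda>x. x) then w else v)"
  have w'c: "w' = (\<lambda>x. x) \<or> w' = v" using g f unfolding w'_def by auto
  have "compose X f gs = U X w' m k"
    unfolding compose_def hd
  proof (simp add: U_def, rule ext)
    fix xs
    show "(if xs \<in> args X m then snd f (map (\<lambda>g. snd g xs) gs) else undefined) =
          (if xs \<in> args X m then w' (xs ! k) else undefined)"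
    proof (cases "xs \<in> args X m")
      case True
      have ops: "\<forall>g\<in>set gs. is_op X g" using a CU_is_op vX by blast
      have "map (\<lambda>g. snd g xs) gs \<in> args X n"
        using ops True a len unfolding args_def is_op_def by auto
      then have "snd f (map (\<lambda>g. snd g xs) gs) = v1 (snd (gs ! j) xs)"
        using f len by (simp add: U_def)
      also have "\<dots> = v1 (w (xs ! k))" using g mm True by (simp add: U_def)
      also have "\<dots> = w' (xs ! k)"
      proof -
        have "xs ! k \<in> X" using True g mm unfolding args_def by auto
        then show ?thesis using f(2) g(2) idem unfolding w'_def by auto
      qed
      finally show ?thesis using True by simp
    qed simp
  qed
  then show "compose X f gs \<in> CU X v" unfolding CU_def using w'c g mm by blast
qed

lemma CU_fin: "finite {p \<in> CU X v. fst p = n}"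
proof -
  have "{p \<in> CU X v. fst p = n} \<subseteq> (\<lambda>(w,j). U X w n j) ` ({(\<lambda>x. x), v} \<times> {..<n})"
    unfolding CU_def by (auto simp: U_def)
  then show ?thesis by (rule finite_subset) auto
qed

lemma local_of_fin:
  assumes cl: "clone X C" and fin: "\<And>n. finite {p \<in> C. fst p = n}"
  shows "local_clone X C"
  unfolding local_clone_def
proof (intro conjI cl allI impI)
  fix g
  assume a: "is_op X g \<and> (\<forall>B. finite B \<and> B \<subseteq> args X (fst g) \<longrightarrow>
               (\<exists>f\<in>C. fst f = fst g \<and> (\<forall>xs\<in>B. snd f xs = snd g xs)))"
  show "g \<in> C"
  proof (rule ccontr)
    assume gn: "g \<notin> C"
    let ?F = "{p \<in> C. fst p = fst g}"
    have "\<forall>p\<in>?F. \<exists>xs\<in>args X (fst g). snd p xs \<noteq> snd g xs"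
    proof
      fix p assume p: "p \<in> ?F"
      have "is_op X p" using cl p unfolding clone_def by auto
      show "\<exists>xs\<in>args X (fst g). snd p xs \<noteq> snd g xs"
      proof (rule ccontr)
        assume "\<not> ?thesis"
        then have "\<forall>xs. snd p xs = snd g xs" using \<open>is_op X p\<close> a p unfolding is_op_def by auto
        then have "p = g" using p by (simp add: prod_eq_iff ext)
        then show False using p gn by auto
      qed
    qed
    then have "\<forall>p\<in>?F. \<exists>xs. xs \<in> args X (fst g) \<and> snd p xs \<noteq> snd g xs" by blast
    from bchoice[OF this] obtain c where c: "\<forall>p\<in>?F. c p \<in> args X (fst g) \<and> snd p (c p) \<noteq> snd g (c p)"
      by blast
    have "finite (c ` ?F)" using fin by auto
    moreover have "c ` ?F \<subseteq> args X (fst g)" using c by auto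
    ultimately obtain f where f: "f \<in> C" "fst f = fst g" "\<forall>xs\<in>c ` ?F. snd f xs = snd g xs"
      using a by blast
    then have fF: "f \<in> ?F" by simp
    then have "c f \<in> c ` ?F" by (rule imageI)
    then have "snd f (c f) = snd g (c f)" using f(3) by blast
    moreover have "snd f (c f) \<noteq> snd g (c f)" using c fF by blast
    ultimately show False by simp
  qed
qed

lemma CU_local: "v ` X \<subseteq> X \<Longrightarrow> \<forall>x\<in>X. v (v x) = v x \<Longrightarrow> CU X v \<in> Cl_loc X"
  unfolding Cl_loc_def by (rule CollectI, rule local_of_fin[OF CU_clone CU_fin])

lemma clone_Int: assumes "clone A C" "clone A D" shows "clone A (C \<inter> D)"
  unfolding clone_def
proof (intro conjI allI impI ballI)
  fix p assume "p \<in> C \<inter> D" then show "is_op A p" using assms(1) unfolding clone_def by blast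
next
  fix n i :: nat assume "1 \<le> n \<and> i < n"
  then show "proj A n i \<in> C \<inter> D" using assms unfolding clone_def by simp
next
  fix f gs m
  assume h: "f \<in> C \<inter> D \<and> length gs = fst f \<and> set gs \<subseteq> C \<inter> D \<and> (\<forall>g\<in>set gs. fst g = m)"
  have c1: "\<forall>f gs m. f \<in> C \<and> length gs = fst f \<and> set gs \<subseteq> C \<and> (\<forall>g\<in>set gs. fst g = m) \<longrightarrow> compose A f gs \<in> C"
    using assms(1) unfolding clone_def by (elim conjE)
  have c2: "\<forall>f gs m. f \<in> D \<and> length gs = fst f \<and> set gs \<subseteq> D \<and> (\<forall>g\<in>set gs. fst g = m) \<longrightarrow> compose A f gs \<in> D"
    using assms(2) unfolding clone_def by (elim conjE)
  have "compose A f gs \<in> C" using c1[rule_format, of f gs m] h by auto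
  moreover have "compose A f gs \<in> D" using c2[rule_format, of f gs m] h by auto
  ultimately show "compose A f gs \<in> C \<inter> D" by simp
qed

lemma ops_countable:
  assumes "finite A" shows "countable {p. is_op A p}"
proof -
  let ?G = "\<lambda>p::'a operation. (fst p, {(xs, snd p xs) | xs. xs \<in> args A (fst p)})"
  have inj: "inj_on ?G {p. is_op A p}"
  proof (rule inj_onI)
    fix p q assume p: "p \<in> {p. is_op A p}" and q: "q \<in> {p. is_op A p}" and e: "?G p = ?G q"
    have n: "fst p = fst q" using e by simp
    have "\<forall>xs. snd p xs = snd q xs"
    proof
      fix xs show "snd p xs = snd q xs"
      proof (cases "xs \<in> args A (fst p)")
        case True
        then have "(xs, snd p xs) \<in> {(xs, snd q xs) | xs. xs \<in> args A (fst q)}" using e by auto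
        then show ?thesis by auto
      next
        case False then show ?thesis using p q n unfolding is_op_def by auto
      qed
    qed
    then show "p = q" using n by (simp add: prod_eq_iff ext)
  qed
  have "?G ` {p. is_op A p} \<subseteq> UNIV \<times> {S. finite S \<and> S \<subseteq> lists A \<times> A}"
  proof (rule image_subsetI)
    fix p :: "'a operation" assume "p \<in> {p. is_op A p}"
    then have sub: "{(xs, snd p xs) | xs. xs \<in> args A (fst p)} \<subseteq> lists A \<times> A"
      unfolding is_op_def args_def by auto
    have "{(xs, snd p xs) | xs. xs \<in> args A (fst p)} = (\<lambda>xs. (xs, snd p xs)) ` args A (fst p)" by auto
    moreover have "finite (args A (fst p))"
    proof -
      have f: "finite {xs. set xs \<subseteq> A \<and> length xs = fst p}" by (rule finite_lists_length_eq[OF assms])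
      have e: "{xs. length xs = fst p \<and> set xs \<subseteq> A} = {xs. set xs \<subseteq> A \<and> length xs = fst p}" by blast
      show ?thesis unfolding args_def e by (rule f)
    qed
    ultimately show "?G p \<in> UNIV \<times> {S. finite S \<and> S \<subseteq> lists A \<times> A}"
      using sub by simp
  qed
  moreover have "countable (UNIV \<times> {S. finite S \<and> S \<subseteq> lists A \<times> A} :: (nat \<times> _) set)"
    using assms by (intro countable_SIGMA countable_Collect_finite_subset) (auto intro: countable_finite)
  ultimately have "countable (?G ` {p. is_op A p})" by (rule countable_subset)
  then show ?thesis using inj countable_image_inj_on by blast
qed

lemma Pow_uncountable: assumes "infinite Y" shows "uncountable (Pow Y)"
proof
  assume c: "countable (Pow Y)"
  obtain e :: "nat \<Rightarrow> _" where e: "inj e" "range e \<subseteq> Y" using infinite_countable_subset[OF assms] by blast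
  have r: "range (from_nat_into (Pow Y)) = Pow Y" using c by (intro range_from_nat_into) auto
  define D where "D = {e n | n. e n \<notin> from_nat_into (Pow Y) n}"
  have "D \<in> Pow Y" using e unfolding D_def by auto
  then obtain k where k: "D = from_nat_into (Pow Y) k" using r by (metis imageE)
  have "e k \<in> D \<longleftrightarrow> e k \<notin> from_nat_into (Pow Y) k" unfolding D_def by (auto simp: inj_eq[OF e(1)])
  then have "e k \<in> D \<longleftrightarrow> e k \<notin> D" using k by simp
  then show False by blast
qed


theorem corollary2p5:
  fixes X :: "'x set"
  assumes "countable X" and "infinite X"
  shows "\<not> (\<exists>(A :: 'a set) h. finite A \<and> lattice_embedding (Cl_loc X) (Cl A) h)"
proof
  assume "\<exists>(A :: 'a set) h. finite A \<and> lattice_embedding (Cl_loc X) (Cl A) h"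
  then obtain A :: "'a set" and h where fA: "finite A" and emb: "lattice_embedding (Cl_loc X) (Cl A) h"
    by blast
  have hCl: "h ` Cl_loc X \<subseteq> Cl A" and hinj: "inj_on h (Cl_loc X)"
    and hglb: "\<And>a b c. a \<in> Cl_loc X \<Longrightarrow> b \<in> Cl_loc X \<Longrightarrow> is_glb (Cl_loc X) a b c \<Longrightarrow> is_glb (Cl A) (h a) (h b) (h c)"
    using emb unfolding lattice_embedding_def by blast+
  obtain a0 where a0: "a0 \<in> X" using infinite_imp_nonempty[OF assms(2)] by blast
  have "infinite (X - {a0})" using assms(2) by simp
  then obtain a1 where "a1 \<in> X - {a0}" using infinite_imp_nonempty by blast
  then have a1: "a1 \<in> X" "a1 \<noteq> a0" by auto
  define Y where "Y = X - {a0, a1}"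
  have infY: "infinite Y" unfolding Y_def using assms(2) by auto
  define u where "u T = (\<lambda>x. if x \<in> T \<or> x = a0 then x else a0)" for T :: "'x set"
  define C where "C T = CU X (u T)" for T
  define P where "P = CU X (\<lambda>x. x)"
  have uX: "u T ` X \<subseteq> X" for T unfolding u_def using a0 by auto
  have uid: "\<forall>x\<in>X. u T (u T x) = u T x" for T unfolding u_def by auto
  have CL: "C T \<in> Cl_loc X" for T unfolding C_def by (rule CU_local[OF uX uid])
  have PL: "P \<in> Cl_loc X" unfolding P_def by (rule CU_local) auto
  have PC: "P \<subseteq> C T" for T unfolding P_def C_def CU_def by blast
  have ua1: "u T a1 = a0" if "T \<subseteq> Y" for T using that a1 unfolding u_def Y_def by auto
  have memP: "p \<in> P" if "p \<in> C T" "p \<in> C T'" "T \<subseteq> Y" "T' \<subseteq> Y" "T \<noteq> T'" for p T T'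
  proof -
    note H = that
    obtain v n j where p1: "p = U X v n j" "v = (\<lambda>x. x) \<or> v = u T" "1 \<le> n" "j < n"
    proof -
      have "p \<in> CU X (u T)" using H(1) by (simp add: C_def)
      then show ?thesis using that unfolding CU_def by blast
    qed
    obtain w n' k where p2: "p = U X w n' k" "w = (\<lambda>x. x) \<or> w = u T'" "1 \<le> n'" "k < n'"
    proof -
      have "p \<in> CU X (u T')" using H(2) by (simp add: C_def)
      then show ?thesis using that unfolding CU_def by blast
    qed
    have nn: "n' = n" using p1 p2 by (simp add: U_def)
    show ?thesis
    proof (cases "v = (\<lambda>x. x)")
      case True then show ?thesis using p1 unfolding P_def CU_def by blast
    next
      case False
      then have v: "v = u T" using p1 by auto
      have vw: "\<forall>x\<in>X. v x = w x" using U_eq[of X v n j w k] p1 p2 nn by auto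
      show ?thesis
      proof (cases "w = (\<lambda>x. x)")
        case True
        then have "u T a1 = a1" using vw v a1 by auto
        then show ?thesis using ua1[OF H(3)] a1 by simp
      next
        case False
        then have w: "w = u T'" using p2 by auto
        have "T = T'"
        proof
          show "T \<subseteq> T'"
          proof
            fix x assume "x \<in> T"
            then have x: "x \<in> X" "x \<noteq> a0" using H(3) unfolding Y_def by auto
            have "u T x = u T' x" using vw v w x by simp
            then show "x \<in> T'" using x \<open>x \<in> T\<close> unfolding u_def by (auto split: if_splits)
          qed
          show "T' \<subseteq> T"
          proof
            fix x assume "x \<in> T'"
            then have x: "x \<in> X" "x \<noteq> a0" using H(4) unfolding Y_def by auto
            have "u T x = u T' x" using vw v w x by simp
            then show "x \<in> T" using x \<open>x \<in> T'\<close> unfolding u_def by (auto split: if_splits)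
          qed
        qed
        then show ?thesis using H(5) by simp
      qed
    qed
  qed
  have CneP: "C T \<noteq> P" if "T \<subseteq> Y" for T
  proof
    assume e: "C T = P"
    have "U X (u T) 1 0 \<in> C T" unfolding C_def CU_def by auto
    then have "U X (u T) 1 0 \<in> P" using e by simp
    then obtain w n j where "U X (u T) 1 0 = U X w n j" "w = (\<lambda>x. x)" "j < n"
      unfolding P_def CU_def by auto
    moreover then have "n = 1" by (simp add: U_def)
    ultimately have "u T a1 = a1" using U_eq[of X "u T" 1 0 w j a1] a1 by auto
    then show False using ua1[OF that] a1 by simp
  qed
  have glb1: "is_glb (Cl_loc X) (C T) P P" for T
    unfolding is_glb_def using PL PC by blast
  have glb2: "is_glb (Cl_loc X) (C T) (C T') P" if "T \<subseteq> Y" "T' \<subseteq> Y" "T \<noteq> T'" for T T'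
    unfolding is_glb_def using PL PC memP[OF _ _ that] by blast
  have hsub: "h P \<subseteq> h (C T)" for T
    using hglb[OF CL PL glb1] unfolding is_glb_def by blast
  have hne: "h (C T) \<noteq> h P" if "T \<subseteq> Y" for T
    using hinj CL PL CneP[OF that] by (meson inj_onD)
  have "\<exists>f. f \<in> h (C T) - h P" if "T \<subseteq> Y" for T using hsub hne[OF that] by blast
  then obtain f where f: "\<And>T. T \<subseteq> Y \<Longrightarrow> f T \<in> h (C T) - h P" by metis
  have inj: "inj_on f (Pow Y)"
  proof (rule inj_onI)
    fix T T' assume T: "T \<in> Pow Y" and T': "T' \<in> Pow Y" and e: "f T = f T'"
    show "T = T'"
    proof (rule ccontr)
      assume ne: "T \<noteq> T'"
      have g: "is_glb (Cl A) (h (C T)) (h (C T')) (h P)"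
        using hglb[OF CL CL glb2] T T' ne by auto
      have "h (C T) \<in> Cl A" "h (C T') \<in> Cl A" using hCl CL by auto
      then have "h (C T) \<inter> h (C T') \<in> Cl A" unfolding Cl_def using clone_Int by blast
      then have "h (C T) \<inter> h (C T') \<subseteq> h P" using g unfolding is_glb_def by blast
      moreover have "f T \<in> h (C T) \<inter> h (C T')"
      proof -
        have "f T \<in> h (C T)" using f T by blast
        moreover have "f T' \<in> h (C T')" using f T' by blast
        ultimately show ?thesis using e by simp
      qed
      ultimately show False using f T by auto
    qed
  qed
  have "f ` Pow Y \<subseteq> {p. is_op A p}"
  proof
    fix p assume "p \<in> f ` Pow Y"
    then obtain T where T: "T \<subseteq> Y" "p = f T" by auto
    have "h (C T) \<in> Cl A" using hCl CL by auto
    then show "p \<in> {p. is_op A p}" using f[OF T(1)] T(2) unfolding Cl_def clone_def by auto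
  qed
  then have "countable (f ` Pow Y)" using ops_countable[OF fA] countable_subset by blast
  then have "countable (Pow Y)" using inj countable_image_inj_on by blast
  then show False using Pow_uncountable[OF infY] by simp
qed

end
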